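(* For every integer $r\ge 3$ and every integer $s$ with $3\le s\le 2r$, there exists an $r$-uniform linear hypertree $H$ with $\Delta(H)=s$ and $\hat{n}(H)=0$.
   Context: All hypergraphs are finite, simple (if $e\subseteq e'$ are hyperedges then $e=e'$) and have no loops; isolated vertices are allowed. $H$ is $r$-uniform if every hyperedge has exactly $r$ vertices. The degree of a vertex is the number of hyperedges containing it, and $\Delta(H)$ is the maximum degree. $H$ is linear if $|e\cap e'|\le 1$ for all distinct hyperedges $e,e'$. $H$ is a hypertree if there is a tree $T$ with $V(T)=V(H)$ such that for every hyperedge $e$ the induced subgraph $T[e]$ is connected. A digraph has arcs $(u,v)$ with no pair of opposite arcs; it is acyclic if it has no directed cycle. For a digraph $D$, $N^-_D(v)=\{u:(u,v)\in A(D)\}$ and $N^+_D(v)=\{u:(v,u)\in A(D)\}$. The niche hypergraph $NH(D)$ of an acyclic digraph $D$ has vertex set $V(D)$ and hyperedge set $\{e\subseteq V(D): |e|\ge 2 \text{ and } e=N^-_D(v) \text{ or } e=N^+_D(v) \text{ for some } v\in V(D)\}$. The niche number $\hat n(H)$ is the minimum $k\ge 0$ such that $H$ together with $k$ additional isolated vertices is the niche hypergraph of an acyclic digraph ($\infty$ if no such $k$ exists). *)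

theory Defs
  imports Main "HOL-Library.Extended_Nat"
begin

definition hypergraph :: "'a set \<Rightarrow> 'a set set \<Rightarrow> bool" where
  "hypergraph V E \<longleftrightarrow> finite V \<and> (\<forall>e\<in>E. e \<subseteq> V \<and> card e \<ge> 2)
     \<and> (\<forall>e\<in>E. \<forall>e'\<in>E. e \<subseteq> e' \<longrightarrow> e = e')"

definition uniform :: "nat \<Rightarrow> 'a set set \<Rightarrow> bool" where
  "uniform r E \<longleftrightarrow> (\<forall>e\<in>E. card e = r)"

definition hdegree :: "'a set set \<Rightarrow> 'a \<Rightarrow> nat" where
  "hdegree E v = card {e\<in>E. v \<in> e}"

definition max_degree :: "'a set \<Rightarrow> 'a set set \<Rightarrow> nat" where
  "max_degree V E = Max (hdegree E ` V)"

definition linear_hg :: "'a set set \<Rightarrow> bool" where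
  "linear_hg E \<longleftrightarrow> (\<forall>e\<in>E. \<forall>e'\<in>E. e \<noteq> e' \<longrightarrow> card (e \<inter> e') \<le> 1)"

definition ugraph :: "'a set \<Rightarrow> 'a set set \<Rightarrow> bool" where
  "ugraph V T \<longleftrightarrow> (\<forall>f\<in>T. \<exists>u v. u \<noteq> v \<and> u \<in> V \<and> v \<in> V \<and> f = {u, v})"

definition adj_on :: "'a set set \<Rightarrow> 'a set \<Rightarrow> ('a \<times> 'a) set" where
  "adj_on T S = {(u, v). u \<in> S \<and> v \<in> S \<and> {u, v} \<in> T}"

definition connected_on :: "'a set set \<Rightarrow> 'a set \<Rightarrow> bool" where
  "connected_on T S \<longleftrightarrow> (\<forall>u\<in>S. \<forall>v\<in>S. (u, v) \<in> (adj_on T S)\<^sup>*)"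

text \<open>A tree: a connected graph without cycles; acyclicity is expressed as every edge
  being a bridge (removing edge {u,v} disconnects u from v).\<close>
definition is_tree :: "'a set \<Rightarrow> 'a set set \<Rightarrow> bool" where
  "is_tree V T \<longleftrightarrow> ugraph V T \<and> connected_on T V
     \<and> (\<forall>u v. {u, v} \<in> T \<longrightarrow> u \<noteq> v \<longrightarrow> (u, v) \<notin> (adj_on (T - {{u, v}}) V)\<^sup>*)"

definition hypertree :: "'a set \<Rightarrow> 'a set set \<Rightarrow> bool" where
  "hypertree V E \<longleftrightarrow> (\<exists>T. is_tree V T \<and> (\<forall>e\<in>E. connected_on T e))"

text \<open>A digraph (V, A): arcs between vertices of V, no pair of opposite arcs
  (in particular no loops).\<close>
definition digraph :: "'a set \<Rightarrow> ('a \<times> 'a) set \<Rightarrow> bool" where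
  "digraph V A \<longleftrightarrow> A \<subseteq> V \<times> V \<and> (\<forall>u v. (u, v) \<in> A \<longrightarrow> (v, u) \<notin> A)"

definition acyclic_digraph :: "'a set \<Rightarrow> ('a \<times> 'a) set \<Rightarrow> bool" where
  "acyclic_digraph V A \<longleftrightarrow> digraph V A \<and> acyclic A"

definition in_nbrs :: "('a \<times> 'a) set \<Rightarrow> 'a \<Rightarrow> 'a set" where
  "in_nbrs A v = {u. (u, v) \<in> A}"

definition out_nbrs :: "('a \<times> 'a) set \<Rightarrow> 'a \<Rightarrow> 'a set" where
  "out_nbrs A v = {u. (v, u) \<in> A}"

definition niche_edges :: "'a set \<Rightarrow> ('a \<times> 'a) set \<Rightarrow> 'a set set" where
  "niche_edges V A = {e. e \<subseteq> V \<and> card e \<ge> 2 \<and>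
      (\<exists>v\<in>V. e = in_nbrs A v \<or> e = out_nbrs A v)}"

text \<open>(V, E) together with k additional isolated vertices is the niche hypergraph of an
  acyclic digraph.\<close>
definition niche_realizable :: "'a set \<Rightarrow> 'a set set \<Rightarrow> nat \<Rightarrow> bool" where
  "niche_realizable V E k \<longleftrightarrow> (\<exists>I A. finite I \<and> card I = k \<and> I \<inter> V = {} \<and>
      acyclic_digraph (V \<union> I) A \<and> niche_edges (V \<union> I) A = E)"

definition niche_number :: "'a set \<Rightarrow> 'a set set \<Rightarrow> enat" where
  "niche_number V E = (if \<exists>k. niche_realizable V E k
      then enat (LEAST k. niche_realizable V E k) else \<infinity>)"

end

theory Submission imports Defs "HOL-Library.Nat_Bijection" begin

lemma acyclic_rank:
  fixes h :: "'a \<Rightarrow> nat"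
  assumes "\<forall>(p,q)\<in>A. h p < h q" shows "acyclic A"
proof -
  have "h p < h q" if "(p,q) \<in> A\<^sup>+" for p q
    using that by (induction rule: trancl_induct) (use assms in auto)
  then show ?thesis by (auto simp: acyclic_def)
qed

lemma star_connected:
  assumes "c \<in> S" "\<forall>y\<in>S. y \<noteq> c \<longrightarrow> {y,c} \<in> T" shows "connected_on T S"
  unfolding connected_on_def
proof (intro ballI)
  fix u v assume u: "u \<in> S" and v: "v \<in> S"
  have 1: "(u,c) \<in> (adj_on T S)\<^sup>*"
  proof (cases "u = c")
    case False then show ?thesis using assms u by (intro r_into_rtrancl) (auto simp: adj_on_def)
  qed simp
  have 2: "(c,v) \<in> (adj_on T S)\<^sup>*"
  proof (cases "v = c")
    case False then show ?thesis using assms v by (intro r_into_rtrancl) (auto simp: adj_on_def insert_commute)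
  qed simp
  show "(u,v) \<in> (adj_on T S)\<^sup>*" using 1 2 by (rule rtrancl_trans)
qed

lemma parent_tree:
  fixes par :: "'a \<Rightarrow> 'a" and h :: "'a \<Rightarrow> nat"
  assumes rt: "rt \<in> V" and pV: "\<And>vv. vv \<in> V \<Longrightarrow> vv \<noteq> rt \<Longrightarrow> par vv \<in> V"
    and ph: "\<And>vv. vv \<in> V \<Longrightarrow> vv \<noteq> rt \<Longrightarrow> h (par vv) < h vv"
  shows "is_tree V {{q, par q} | q. q \<in> V \<and> q \<noteq> rt}"
proof -
  define T where "T = {{q, par q} | q. q \<in> V \<and> q \<noteq> rt}"
  have ug: "ugraph V T"
    unfolding ugraph_def T_def
  proof
    fix f assume "f \<in> {{q, par q} |q. q \<in> V \<and> q \<noteq> rt}"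
    then obtain vv where "f = {vv, par vv}" "vv \<in> V" "vv \<noteq> rt" by auto
    moreover have "vv \<noteq> par vv" using ph[OF \<open>vv \<in> V\<close> \<open>vv \<noteq> rt\<close>] by auto
    ultimately show "\<exists>u vv. u \<noteq> vv \<and> u \<in> V \<and> vv \<in> V \<and> f = {u, vv}" using pV by blast
  qed
  let ?R = "adj_on T V"
  have reach: "(vv, rt) \<in> ?R\<^sup>* \<and> (rt, vv) \<in> ?R\<^sup>*" if "vv \<in> V" for vv
    using that
  proof (induction "h vv" arbitrary: vv rule: less_induct)
    case less
    show ?case
    proof (cases "vv = rt")
      case False
      have e1: "(vv, par vv) \<in> ?R" using less.prems False pV unfolding adj_on_def T_def by auto
      have e2: "(par vv, vv) \<in> ?R" using less.prems False pV unfolding adj_on_def T_def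
        by (auto simp: insert_commute)
      have "(par vv, rt) \<in> ?R\<^sup>* \<and> (rt, par vv) \<in> ?R\<^sup>*"
        using less.hyps[OF ph[OF less.prems False]] pV[OF less.prems False] by blast
      then show ?thesis using e1 e2
        by (meson converse_rtrancl_into_rtrancl rtrancl.rtrancl_into_rtrancl)
    qed simp
  qed
  have conn: "connected_on T V" unfolding connected_on_def
    using reach by (meson rtrancl_trans)
  have bridge: "(u, vv) \<notin> (adj_on (T - {{u, vv}}) V)\<^sup>*" if uv: "{u,vv} \<in> T" "u \<noteq> vv" for u vv
  proof
    assume path: "(u, vv) \<in> (adj_on (T - {{u, vv}}) V)\<^sup>*"
    obtain c where c: "c \<in> V" "c \<noteq> rt" "{u,vv} = {c, par c}" using uv unfolding T_def by auto
    define P where "P = {(y, par y) | y. y \<in> V \<and> y \<noteq> rt}"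
    define D where "D = {y. (y,c) \<in> P\<^sup>*}"
    let ?R' = "adj_on (T - {{u, vv}}) V"
    have hmono: "h q \<le> h p" if "(p,q) \<in> P\<^sup>*" for p q
      using that by (induction rule: rtrancl_induct) (auto simp: P_def dest: ph)
    have cD: "c \<in> D" unfolding D_def by simp
    have pcD: "par c \<notin> D"
    proof
      assume "par c \<in> D"
      then have "h c \<le> h (par c)" using hmono unfolding D_def by auto
      with ph[OF c(1,2)] show False by simp
    qed
    have clos: "z \<in> D" if yz: "(y,z) \<in> ?R'" and yD: "y \<in> D" for y z
    proof -
      from yz have yzT: "{y,z} \<in> T" "{y,z} \<noteq> {c, par c}" "y \<in> V" "z \<in> V"
        using c(3) by (auto simp: adj_on_def)
      then obtain d where d: "d \<in> V" "d \<noteq> rt" "{y,z} = {d, par d}" unfolding T_def by auto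
      then have "(y = d \<and> z = par d) \<or> (y = par d \<and> z = d)" by (auto simp: doubleton_eq_iff)
      then show ?thesis
      proof
        assume a: "y = d \<and> z = par d"
        have "(y,c) \<in> P\<^sup>*" using yD D_def by auto
        then show ?thesis
        proof (cases rule: converse_rtranclE)
          case base then show ?thesis using a yzT d by auto
        next
          case (step y')
          then have "y' = z" using a by (auto simp: P_def)
          then show ?thesis using step D_def by auto
        qed
      next
        assume a: "y = par d \<and> z = d"
        then have "(z,y) \<in> P" using d P_def by auto
        then show ?thesis using yD D_def by (auto intro: converse_rtrancl_into_rtrancl)
      qed
    qed
    have symR: "(z,y) \<in> ?R'" if "(y,z) \<in> ?R'" for y z
      using that by (auto simp: adj_on_def insert_commute)
    have inv: "(p \<in> D) = (q \<in> D)" if "(p,q) \<in> ?R'\<^sup>*" for p q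
      using that
    proof (induction rule: rtrancl_induct)
      case (step q q')
      then show ?case using clos symR by blast
    qed simp
    have "(u \<in> D) = (vv \<in> D)" using inv path by blast
    moreover have "(u = c \<and> vv = par c) \<or> (u = par c \<and> vv = c)" using c(3) by (auto simp: doubleton_eq_iff)
    ultimately show False using cD pcD by blast
  qed
  show ?thesis unfolding T_def[symmetric] is_tree_def using ug conn bridge by blast
qed


definition L :: "nat \<Rightarrow> nat \<Rightarrow> nat" where "L i j = prod_encode (i, j)"
lemma L_eq[simp]: "L i j = L i' j' \<longleftrightarrow> i = i' \<and> j = j'" by (simp add: L_def)
lemma L_dec[simp]: "prod_decode (L i j) = (i, j)" by (simp add: L_def)

definition xx :: nat where "xx = L 0 0"
definition ww :: "nat \<Rightarrow> nat" where "ww i = L 1 i"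
definition uu :: "nat \<Rightarrow> nat" where "uu i = L 2 i"
definition pw :: "nat \<Rightarrow> nat \<Rightarrow> nat" where "pw i t = L 3 (L i t)"
definition pu :: "nat \<Rightarrow> nat \<Rightarrow> nat" where "pu i t = L 4 (L i t)"

lemmas vdefs = xx_def ww_def uu_def pw_def pu_def

definition Ws :: "nat \<Rightarrow> nat set" where "Ws r = ww ` {..<r}"
definition Us :: "nat \<Rightarrow> nat set" where "Us r = uu ` {..<r}"
definition PW :: "nat \<Rightarrow> nat \<Rightarrow> nat set" where "PW r i = pw i ` {..<r-1}"
definition PU :: "nat \<Rightarrow> nat \<Rightarrow> nat set" where "PU r i = pu i ` {..<r-1}"

definition VV :: "nat \<Rightarrow> nat \<Rightarrow> nat \<Rightarrow> nat set" where
  "VV r a b = insert xx (Ws r \<union> Us r \<union> (\<Union>i<a. PW r i) \<union> (\<Union>i<b. PU r i))"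
definition AA :: "nat \<Rightarrow> nat \<Rightarrow> nat \<Rightarrow> (nat \<times> nat) set" where
  "AA r a b = (\<lambda>i. (uu i, xx)) ` {..<r} \<union> (\<lambda>i. (xx, ww i)) ` {..<r}
     \<union> (\<Union>i<a. (\<lambda>t. (pw i t, ww i)) ` {..<r-1}) \<union> (\<Union>i<b. (\<lambda>t. (uu i, pu i t)) ` {..<r-1})"
definition EE :: "nat \<Rightarrow> nat \<Rightarrow> nat \<Rightarrow> nat set set" where
  "EE r a b = {Ws r, Us r} \<union> (\<lambda>i. insert xx (PW r i)) ` {..<a} \<union> (\<lambda>i. insert xx (PU r i)) ` {..<b}"

lemma card_Ws: "card (Ws r) = r" unfolding Ws_def by (subst card_image) (auto simp: inj_on_def ww_def)
lemma card_Us: "card (Us r) = r" unfolding Us_def by (subst card_image) (auto simp: inj_on_def uu_def)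
lemma card_PW: "r \<ge> 1 \<Longrightarrow> card (insert xx (PW r i)) = r"
  unfolding PW_def by (subst card_insert_disjoint) (auto simp: card_image inj_on_def vdefs)
lemma card_PU: "r \<ge> 1 \<Longrightarrow> card (insert xx (PU r i)) = r"
  unfolding PU_def by (subst card_insert_disjoint) (auto simp: card_image inj_on_def vdefs)

lemma uniformE: "r \<ge> 1 \<Longrightarrow> uniform r (EE r a b)"
  by (auto simp: uniform_def EE_def card_Ws card_Us card_PW card_PU)

lemma finV: "finite (VV r a b)" by (simp add: VV_def Ws_def Us_def PW_def PU_def)

lemma hypergraphE: assumes "r \<ge> 3" "a \<le> r" "b \<le> r" shows "hypergraph (VV r a b) (EE r a b)"
proof -
  have fin: "finite e" if "e \<in> EE r a b" for e
    using that by (auto simp: EE_def Ws_def Us_def PW_def PU_def)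
  have sub: "e \<subseteq> VV r a b" if "e \<in> EE r a b" for e
    using that by (auto simp: EE_def VV_def)
  have u: "uniform r (EE r a b)" using uniformE assms by simp
  show ?thesis unfolding hypergraph_def
  proof (intro conjI ballI impI)
    show "finite (VV r a b)" by (rule finV)
  next
    fix e assume "e \<in> EE r a b" then show "e \<subseteq> VV r a b" by (rule sub)
  next
    fix e assume "e \<in> EE r a b" then show "2 \<le> card e" using u assms by (auto simp: uniform_def)
  next
    fix e e' assume "e \<in> EE r a b" "e' \<in> EE r a b" "e \<subseteq> e'"
    then show "e = e'" using u fin by (metis card_subset_eq uniform_def)
  qed
qed

lemma linearE: "linear_hg (EE r a b)"
  unfolding linear_hg_def
proof (intro ballI impI)
  fix e e' assume e: "e \<in> EE r a b" and e': "e' \<in> EE r a b" and ne: "e \<noteq> e'"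
  have "e \<inter> e' \<subseteq> {xx}"
    using e e' ne by (auto simp: EE_def Ws_def Us_def PW_def PU_def vdefs)
  then show "card (e \<inter> e') \<le> 1"
    by (metis card.empty card.insert empty_iff finite.intros(1) le_zero_eq linorder_linear subset_singletonD zero_le_one One_nat_def card_le_Suc0_iff_eq order_refl)
qed


definition par :: "nat \<Rightarrow> nat" where
  "par n = (case prod_decode n of (i, j) \<Rightarrow>
     if i = 1 \<and> j \<noteq> 0 then ww 0 else if i = 2 \<and> j \<noteq> 0 then uu 0 else xx)"
definition ht :: "nat \<Rightarrow> nat" where
  "ht n = (case prod_decode n of (i, j) \<Rightarrow>
     if i = 0 then 0 else if (i = 1 \<or> i = 2) \<and> j \<noteq> 0 then 2 else 1)"

lemma hypertreeE: assumes "r \<ge> 3" "a \<le> r" "b \<le> r" shows "hypertree (VV r a b) (EE r a b)"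
proof -
  let ?T = "{{q, par q} | q. q \<in> VV r a b \<and> q \<noteq> xx}"
  have t: "is_tree (VV r a b) ?T"
  proof (rule parent_tree)
    show "xx \<in> VV r a b" by (simp add: VV_def)
  next
    fix q assume "q \<in> VV r a b" "q \<noteq> xx"
    then show "par q \<in> VV r a b" using assms
      by (auto simp: VV_def Ws_def Us_def PW_def PU_def par_def vdefs)
  next
    fix q assume "q \<in> VV r a b" "q \<noteq> xx"
    then show "ht (par q) < ht q" using assms
      by (auto simp: VV_def Ws_def Us_def PW_def PU_def par_def ht_def vdefs)
  qed
  have c: "connected_on ?T e" if "e \<in> EE r a b" for e
  proof -
    from that consider "e = Ws r" | "e = Us r" | i where "e = insert xx (PW r i)" "i < a"
      | i where "e = insert xx (PU r i)" "i < b" by (auto simp: EE_def)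
    then show ?thesis
    proof cases
      case 1
      show ?thesis unfolding 1
      proof (rule star_connected[where c = "ww 0"])
        show "ww 0 \<in> Ws r" using assms by (auto simp: Ws_def)
        show "\<forall>y\<in>Ws r. y \<noteq> ww 0 \<longrightarrow> {y, ww 0} \<in> ?T"
        proof (intro ballI impI)
          fix y assume "y \<in> Ws r" "y \<noteq> ww 0"
          then have "{y, ww 0} = {y, par y} \<and> y \<in> VV r a b \<and> y \<noteq> xx"
            by (auto simp: Ws_def par_def VV_def vdefs)
          then show "{y, ww 0} \<in> ?T" by blast
        qed
      qed
    next
      case 2
      show ?thesis unfolding 2
      proof (rule star_connected[where c = "uu 0"])
        show "uu 0 \<in> Us r" using assms by (auto simp: Us_def)
        show "\<forall>y\<in>Us r. y \<noteq> uu 0 \<longrightarrow> {y, uu 0} \<in> ?T"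
        proof (intro ballI impI)
          fix y assume "y \<in> Us r" "y \<noteq> uu 0"
          then have "{y, uu 0} = {y, par y} \<and> y \<in> VV r a b \<and> y \<noteq> xx"
            by (auto simp: Us_def par_def VV_def vdefs)
          then show "{y, uu 0} \<in> ?T" by blast
        qed
      qed
    next
      case 3
      show ?thesis unfolding 3
      proof (rule star_connected[where c = "xx"])
        show "\<forall>y\<in>insert xx (PW r i). y \<noteq> xx \<longrightarrow> {y, xx} \<in> ?T"
        proof (intro ballI impI)
          fix y assume "y \<in> insert xx (PW r i)" "y \<noteq> xx"
          then have "{y, xx} = {y, par y} \<and> y \<in> VV r a b \<and> y \<noteq> xx"
            using 3 by (auto simp: PW_def par_def VV_def vdefs)
          then show "{y, xx} \<in> ?T" by blast
        qed
      qed simp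
    next
      case 4
      show ?thesis unfolding 4
      proof (rule star_connected[where c = "xx"])
        show "\<forall>y\<in>insert xx (PU r i). y \<noteq> xx \<longrightarrow> {y, xx} \<in> ?T"
        proof (intro ballI impI)
          fix y assume "y \<in> insert xx (PU r i)" "y \<noteq> xx"
          then have "{y, xx} = {y, par y} \<and> y \<in> VV r a b \<and> y \<noteq> xx"
            using 4 by (auto simp: PU_def par_def VV_def vdefs)
          then show "{y, xx} \<in> ?T" by blast
        qed
      qed simp
    qed
  qed
  show ?thesis unfolding hypertree_def using t c by blast
qed

lemma edges_meet: "e \<in> EE r a b \<Longrightarrow> e' \<in> EE r a b \<Longrightarrow> e \<noteq> e' \<Longrightarrow> e \<inter> e' \<subseteq> {xx}"
  by (auto simp: EE_def Ws_def Us_def PW_def PU_def vdefs)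

lemma deg_x: assumes "r \<ge> 3" shows "hdegree (EE r a b) xx = a + b"
proof -
  have "{e \<in> EE r a b. xx \<in> e} = (\<lambda>i. insert xx (PW r i)) ` {..<a} \<union> (\<lambda>i. insert xx (PU r i)) ` {..<b}"
    by (auto simp: EE_def Ws_def Us_def vdefs)
  moreover have "card ((\<lambda>i. insert xx (PW r i)) ` {..<a}) = a"
  proof (subst card_image)
    show "inj_on (\<lambda>i. insert xx (PW r i)) {..<a}"
    proof (rule inj_onI)
      fix i j assume "insert xx (PW r i) = insert xx (PW r j)"
      moreover have "pw i 0 \<in> insert xx (PW r i)" using assms by (auto simp: PW_def)
      ultimately have "pw i 0 \<in> insert xx (PW r j)" by simp
      then show "i = j" by (auto simp: PW_def vdefs)
    qed
  qed simp
  moreover have "card ((\<lambda>i. insert xx (PU r i)) ` {..<b}) = b"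
  proof (subst card_image)
    show "inj_on (\<lambda>i. insert xx (PU r i)) {..<b}"
    proof (rule inj_onI)
      fix i j assume "insert xx (PU r i) = insert xx (PU r j)"
      moreover have "pu i 0 \<in> insert xx (PU r i)" using assms by (auto simp: PU_def)
      ultimately have "pu i 0 \<in> insert xx (PU r j)" by simp
      then show "i = j" by (auto simp: PU_def vdefs)
    qed
  qed simp
  moreover have "(\<lambda>i. insert xx (PW r i)) ` {..<a} \<inter> (\<lambda>i. insert xx (PU r i)) ` {..<b} = {}"
  proof -
    have "pw i 0 \<in> insert xx (PW r i)" "pw i 0 \<notin> insert xx (PU r j)" for i j
      using assms by (auto simp: PW_def PU_def vdefs)
    then show ?thesis by blast
  qed
  ultimately show ?thesis unfolding hdegree_def by (simp add: card_Un_disjoint)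
qed

lemma deg_other: assumes "v \<noteq> xx" shows "hdegree (EE r a b) v \<le> 1"
proof -
  have fin: "finite (EE r a b)" by (simp add: EE_def)
  have "\<forall>e\<in>{e \<in> EE r a b. v \<in> e}. \<forall>e'\<in>{e \<in> EE r a b. v \<in> e}. e = e'"
    using edges_meet assms by blast
  then show ?thesis unfolding hdegree_def using fin by (simp add: card_le_Suc0_iff_eq)
qed

lemma maxdegE: assumes "r \<ge> 3" "1 \<le> a + b" shows "max_degree (VV r a b) (EE r a b) = a + b"
  unfolding max_degree_def
proof (rule Max_eqI)
  show "finite (hdegree (EE r a b) ` VV r a b)" using finV by simp
  show "a + b \<in> hdegree (EE r a b) ` VV r a b" using deg_x[OF assms(1)]
    by (metis VV_def image_eqI insertI1)
  fix y assume "y \<in> hdegree (EE r a b) ` VV r a b"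
  then obtain v where "y = hdegree (EE r a b) v" by auto
  then show "y \<le> a + b" using deg_x[OF assms(1)] deg_other[of v r a b] assms(2)
    by (cases "v = xx") auto
qed


context
  fixes r a b :: nat
  assumes r3: "r \<ge> 3" and ar: "a \<le> r" and br: "b \<le> r"
begin

lemma in_x: "in_nbrs (AA r a b) xx = Us r"
  by (auto simp: in_nbrs_def AA_def Us_def vdefs)
lemma out_x: "out_nbrs (AA r a b) xx = Ws r"
  by (auto simp: out_nbrs_def AA_def Ws_def vdefs)
lemma in_w: "in_nbrs (AA r a b) (ww i) = (if i < r then (if i < a then insert xx (PW r i) else {xx}) else {})"
  using ar by (auto simp: in_nbrs_def AA_def PW_def vdefs)
lemma out_w: "out_nbrs (AA r a b) (ww i) = {}"
  by (auto simp: out_nbrs_def AA_def vdefs)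
lemma in_u: "in_nbrs (AA r a b) (uu i) = {}"
  by (auto simp: in_nbrs_def AA_def vdefs)
lemma out_u: "out_nbrs (AA r a b) (uu i) = (if i < r then (if i < b then insert xx (PU r i) else {xx}) else {})"
  using br by (auto simp: out_nbrs_def AA_def PU_def vdefs)
lemma in_pw: "in_nbrs (AA r a b) (pw i t) = {}"
  by (auto simp: in_nbrs_def AA_def vdefs)
lemma out_pw: "card (out_nbrs (AA r a b) (pw i t)) \<le> 1"
proof -
  have "out_nbrs (AA r a b) (pw i t) \<subseteq> {ww i}" by (auto simp: out_nbrs_def AA_def vdefs)
  then show ?thesis by (metis card.empty card.insert empty_iff finite.intros(1) le_zero_eq One_nat_def card_le_Suc0_iff_eq order_refl subset_singletonD)
qed
lemma in_pu: "card (in_nbrs (AA r a b) (pu i t)) \<le> 1"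
proof -
  have "in_nbrs (AA r a b) (pu i t) \<subseteq> {uu i}" by (auto simp: in_nbrs_def AA_def vdefs)
  then show ?thesis by (metis card.empty card.insert empty_iff finite.intros(1) le_zero_eq One_nat_def card_le_Suc0_iff_eq order_refl subset_singletonD)
qed
lemma out_pu: "out_nbrs (AA r a b) (pu i t) = {}"
  by (auto simp: out_nbrs_def AA_def vdefs)

lemma nicheE: "niche_edges (VV r a b) (AA r a b) = EE r a b"
proof
  show "niche_edges (VV r a b) (AA r a b) \<subseteq> EE r a b"
  proof
    fix e assume "e \<in> niche_edges (VV r a b) (AA r a b)"
    then obtain v where e2: "card e \<ge> 2" and v: "v \<in> VV r a b"
      and ev: "e = in_nbrs (AA r a b) v \<or> e = out_nbrs (AA r a b) v"
      by (auto simp: niche_edges_def)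
    from v consider "v = xx" | i where "v = ww i" "i < r" | i where "v = uu i" "i < r"
      | i t where "v = pw i t" | i t where "v = pu i t"
      by (auto simp: VV_def Ws_def Us_def PW_def PU_def)
    then show "e \<in> EE r a b"
    proof cases
      case 1 then show ?thesis using ev in_x out_x by (auto simp: EE_def)
    next
      case 2 then show ?thesis using ev e2 in_w out_w by (auto simp: EE_def split: if_splits)
    next
      case 3 then show ?thesis using ev e2 in_u out_u by (auto simp: EE_def split: if_splits)
    next
      case 4 then show ?thesis using ev e2 in_pw[of i t] out_pw[of i t] by auto
    next
      case 5 then show ?thesis using ev e2 in_pu[of i t] out_pu[of i t] by auto
    qed
  qed
next
  show "EE r a b \<subseteq> niche_edges (VV r a b) (AA r a b)"
  proof
    fix e assume e: "e \<in> EE r a b"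
    have hg: "hypergraph (VV r a b) (EE r a b)" using hypergraphE r3 ar br by blast
    then have 1: "e \<subseteq> VV r a b" "card e \<ge> 2" using e by (auto simp: hypergraph_def)
    have "\<exists>v\<in>VV r a b. e = in_nbrs (AA r a b) v \<or> e = out_nbrs (AA r a b) v"
    proof -
      from e consider "e = Ws r" | "e = Us r" | i where "e = insert xx (PW r i)" "i < a"
        | i where "e = insert xx (PU r i)" "i < b" by (auto simp: EE_def)
      then show ?thesis
      proof cases
        case 1 then show ?thesis using out_x by (auto simp: VV_def)
      next
        case 2 then show ?thesis using in_x by (auto simp: VV_def)
      next
        case 3 then have "ww i \<in> VV r a b" "e = in_nbrs (AA r a b) (ww i)"
          using in_w ar by (auto simp: VV_def Ws_def)
        then show ?thesis by blast
      next
        case 4 then have "uu i \<in> VV r a b" "e = out_nbrs (AA r a b) (uu i)"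
          using out_u br by (auto simp: VV_def Us_def)
        then show ?thesis by blast
      qed
    qed
    then show "e \<in> niche_edges (VV r a b) (AA r a b)" using 1 by (auto simp: niche_edges_def)
  qed
qed

definition hr :: "nat \<Rightarrow> nat" where
  "hr n = (let c = fst (prod_decode n) in if c = 0 then 1 else if c = 1 then 2 else if c = 4 then 2 else 0)"

lemma rankA: "\<forall>(p,q)\<in>AA r a b. hr p < hr q"
  by (auto simp: AA_def hr_def vdefs)

lemma acycA: "acyclic_digraph (VV r a b) (AA r a b)"
proof -
  have sub: "AA r a b \<subseteq> VV r a b \<times> VV r a b"
    using ar br by (auto simp: AA_def VV_def Ws_def Us_def PW_def PU_def)
  have "(q, p) \<notin> AA r a b" if "(p, q) \<in> AA r a b" for p q
  proof
    assume "(q, p) \<in> AA r a b"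
    then have "hr q < hr p" using rankA by blast
    moreover have "hr p < hr q" using rankA that by blast
    ultimately show False by simp
  qed
  then show ?thesis unfolding acyclic_digraph_def digraph_def
    using sub acyclic_rank[OF rankA] by blast
qed

lemma nicheNum: "niche_number (VV r a b) (EE r a b) = 0"
proof -
  have "niche_realizable (VV r a b) (EE r a b) 0"
    unfolding niche_realizable_def
    by (rule exI[of _ "{}"], rule exI[of _ "AA r a b"]) (simp add: acycA nicheE)
  then show ?thesis unfolding niche_number_def by (auto simp: zero_enat_def)
qed

end

theorem theorem3:
  fixes r s :: nat
  assumes "r \<ge> 3" and "3 \<le> s" and "s \<le> 2 * r"
  shows "\<exists>(V :: nat set) E. hypergraph V E \<and> uniform r E \<and> linear_hg E \<and> hypertree V E
           \<and> max_degree V E = s \<and> niche_number V E = 0"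
proof -
  define a where "a = min s r"
  define b where "b = s - a"
  have ab: "a \<le> r" "b \<le> r" "a + b = s" "1 \<le> a + b" using assms by (auto simp: a_def b_def)
  show ?thesis
    using hypergraphE[OF assms(1) ab(1,2)] uniformE[of r a b] linearE[of r a b]
      hypertreeE[OF assms(1) ab(1,2)] maxdegE[OF assms(1) ab(4)] nicheNum[OF assms(1) ab(1,2)]
      assms(1) ab(3) by auto
qed

end
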